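(* We have \[ (n-1)P_{n-1}(y)=P'_{n-1}(y)-P'_n(y)\quad(n\ge1),\qquad (n-1)Q_{n-1}(y)=Q'_{n-1}(y)-Q'_n(y)\quad(n\ge2). \]
   Context: Let $A$ be the ring of formal series $\sum_{n\ge0}q_n(y)x^{-n}$, each $q_n$ a complex polynomial of degree at most $n$, with termwise formal derivatives $a_x=-\sum_{n\ge1}nq_n(y)x^{-n-1}$, $a_y=\sum_{n\ge1}q_n'(y)x^{-n}$, and $\log(1+u)=\sum_{k\ge1}(-1)^{k+1}u^k/k$ for $u$ with zero constant term. Let $V\in A$ be the unique solution of $V=1+\frac{y}{x}-\frac{1}{x}V-V_x-\frac{1}{x}V_y+\frac{1}{x}\log V$, and define polynomials $P_{n-1}$ ($n\ge1$) and $Q_n$ ($n\ge1$) by $V=1+\sum_{n\ge1}P_{n-1}(y)x^{-n}$ and $\log V=\sum_{n\ge1}Q_n(y)x^{-n}$ (so $P_0=y-1$). Primes denote derivatives in $y$. *)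

theory Defs
  imports "HOL-Computational_Algebra.Polynomial"
begin

text \<open>A formal series  sum_{n>=0} q_n(y) x^{-n}  is represented by its coefficient
  sequence  n \<mapsto> q_n  (a complex polynomial in y).\<close>

type_synonym ser = "nat \<Rightarrow> complex poly"

definition serA :: "ser set" where
  "serA = {s. \<forall>n. degree (s n) \<le> n}"

definition ser_one :: ser where "ser_one = (\<lambda>n. if n = 0 then 1 else 0)"

definition ser_add :: "ser \<Rightarrow> ser \<Rightarrow> ser" where "ser_add s t = (\<lambda>n. s n + t n)"
definition ser_sub :: "ser \<Rightarrow> ser \<Rightarrow> ser" where "ser_sub s t = (\<lambda>n. s n - t n)"

definition ser_mult :: "ser \<Rightarrow> ser \<Rightarrow> ser" where
  "ser_mult s t = (\<lambda>n. \<Sum>k\<le>n. s k * t (n - k))"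

fun ser_pow :: "ser \<Rightarrow> nat \<Rightarrow> ser" where
  "ser_pow s 0 = ser_one"
| "ser_pow s (Suc k) = ser_mult s (ser_pow s k)"

definition ser_xinv :: "ser \<Rightarrow> ser" where
  "ser_xinv s = (\<lambda>n. if n = 0 then 0 else s (n - 1))"

text \<open>Termwise derivative in x:  a_x = - sum_{n>=1} n q_n x^{-n-1}.\<close>
definition ser_dx :: "ser \<Rightarrow> ser" where
  "ser_dx s = (\<lambda>n. if n = 0 then 0 else - smult (of_nat (n - 1)) (s (n - 1)))"

definition ser_dy :: "ser \<Rightarrow> ser" where
  "ser_dy s = (\<lambda>n. pderiv (s n))"

text \<open>log(1+u) = sum_{k>=1} (-1)^{k+1} u^k / k for u with zero constant term; the
  coefficient of x^{-n} only receives contributions from k <= n.\<close>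
definition ser_log1p :: "ser \<Rightarrow> ser" where
  "ser_log1p u = (\<lambda>n. \<Sum>k\<in>{1..n}. smult ((-1) ^ (k + 1) / of_nat k) (ser_pow u k n))"

definition ser_log :: "ser \<Rightarrow> ser" where
  "ser_log v = ser_log1p (ser_sub v ser_one)"

definition ser_y_over_x :: ser where
  "ser_y_over_x = (\<lambda>n. if n = 1 then [:0, 1:] else 0)"

definition V_eqn :: "ser \<Rightarrow> bool" where
  "V_eqn V \<longleftrightarrow>
     V = ser_add (ser_sub (ser_sub (ser_sub (ser_add ser_one ser_y_over_x) (ser_xinv V))
                     (ser_dx V)) (ser_xinv (ser_dy V))) (ser_xinv (ser_log V))"

end

theory Submission imports Defs "HOL-Computational_Algebra.Formal_Power_Series" begin
unbundle fps_syntax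

definition toF :: "ser \<Rightarrow> complex poly fps" where "toF s = Abs_fps s"
definition Dy :: "complex poly fps \<Rightarrow> complex poly fps" where
  "Dy f = Abs_fps (\<lambda>n. pderiv (f $ n))"

lemma toF_nth[simp]: "toF s $ n = s n" by (simp add: toF_def)
lemma Dy_nth[simp]: "Dy f $ n = pderiv (f $ n)" by (simp add: Dy_def)

lemma pderiv_sum': "pderiv (sum f A) = sum (\<lambda>x. pderiv (f x)) A"
  by (induction A rule: infinite_finite_induct) (auto simp: pderiv_add)

lemma Dy_add[simp]: "Dy (f + g) = Dy f + Dy g" by (rule fps_ext) (simp add: pderiv_add)
lemma Dy_diff[simp]: "Dy (f - g) = Dy f - Dy g" by (rule fps_ext) (simp add: pderiv_diff)
lemma Dy_minus[simp]: "Dy (- f) = - Dy f" by (rule fps_ext) (simp add: pderiv_minus)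
lemma Dy_0[simp]: "Dy 0 = 0" by (rule fps_ext) simp
lemma Dy_1[simp]: "Dy 1 = 0" by (rule fps_ext) simp
lemma Dy_X[simp]: "Dy fps_X = 0" by (rule fps_ext) (simp add: fps_X_def)
lemma Dy_mult[simp]: "Dy (f * g) = Dy f * g + f * Dy g"
  proof (rule fps_ext)
  fix n
  have "Dy (f * g) $ n = (\<Sum>i=0..n. pderiv (f$i) * g$(n-i) + f$i * pderiv (g$(n-i)))"
    by (simp add: fps_mult_nth pderiv_sum' pderiv_mult mult.commute add.commute)
  also have "\<dots> = (Dy f * g + f * Dy g) $ n" by (simp add: fps_mult_nth sum.distrib)
  finally show "Dy (f * g) $ n = (Dy f * g + f * Dy g) $ n" .
qed
lemma Dy_const: "Dy (fps_const [:c:]) = 0" by (rule fps_ext) (simp add: pderiv_pCons)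
lemma Dy_sum: "Dy (sum f A) = sum (\<lambda>x. Dy (f x)) A"
  by (induction A rule: infinite_finite_induct) auto
lemma Dy_Dt: "Dy (fps_deriv f) = fps_deriv (Dy f)"
  by (rule fps_ext) (simp add: of_nat_poly pderiv_smult)

lemma ser_mult_toF: "ser_mult s t = fps_nth (toF s * toF t)"
  by (rule ext) (simp add: ser_mult_def fps_mult_nth atLeast0AtMost)
lemma ser_pow_toF: "ser_pow s k = fps_nth (toF s ^ k)"
  by (induction k) (auto simp: ser_one_def ser_mult_toF toF_def fps_nth_inverse)

definition logS :: "complex poly fps \<Rightarrow> nat \<Rightarrow> complex poly fps" where
  "logS u N = (\<Sum>k=1..N. fps_const [:(-1)^(k+1) / of_nat k:] * u^k)"

lemma const_sign: "fps_const [:(-1::complex)^m:] = (-1)^m"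
proof (induction m)
  case (Suc m)
  have "fps_const [:(-1::complex)^Suc m:] = - fps_const [:(-1::complex)^m:]"
    by simp
  then show ?case using Suc by simp
qed simp

lemma tele:
  fixes u :: "complex poly fps"
  shows "(1 + u) * (\<Sum>k=1..N. (-1)^(k+1) * u^(k-1)) = 1 - (-u)^N"
proof (induction N)
  case (Suc N)
  have "(1 + u) * (\<Sum>k=1..Suc N. (-1)^(k+1) * u^(k-1))
      = (1 + u) * (\<Sum>k=1..N. (-1)^(k+1) * u^(k-1)) + (1+u) * ((-1)^(N+2) * u^N)"
    by (simp add: distrib_left)
  also have "(-1)^(N+2) * u^N = (-u)^N"
  proof -
    have "(-1::complex poly fps)^(N+2) = (-1)^N" by simp
    then show ?thesis by (simp only: power_minus[of u N])
  qed
  also note Suc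
  also have "1 - (-u)^N + (1+u) * (-u)^N = 1 - (-u)^Suc N"
  proof -
    have "(-u)^Suc N = - u * (-u)^N" by (simp only: power_Suc)
    then show ?thesis by (simp add: ring_distribs)
  qed
  finally show ?case .
qed simp

lemma log_deriv_generic:
  fixes D :: "complex poly fps \<Rightarrow> complex poly fps" and u L :: "complex poly fps"
  assumes add: "\<And>f g. D (f + g) = D f + D g"
  and mult: "\<And>f g. D (f * g) = D f * g + f * D g"
  and const: "\<And>c. D (fps_const [:c:]) = 0"
  and loc: "\<And>f g n. (\<And>j. j \<le> n+1 \<Longrightarrow> f$j = g$j) \<Longrightarrow> D f $ n = D g $ n"
  and u0: "u$0 = 0"
  and L: "\<And>n N. n \<le> N \<Longrightarrow> L $ n = logS u N $ n"
  shows "(1+u) * D L = D u"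
proof -
  have D0: "D 0 = 0" using add[of 0 0] by simp
  have Dsum: "D (sum f A) = sum (\<lambda>x. D (f x)) A" for f :: "nat \<Rightarrow> _" and A
    by (induction A rule: infinite_finite_induct) (auto simp: D0 add)
  have Dc: "D (fps_const [:c:] * f) = fps_const [:c:] * D f" for c f
    by (simp add: mult const)
  have Dpow: "D (u^Suc k) = of_nat (Suc k) * u^k * D u" for k
  proof (induction k)
    case 0 then show ?case by simp
  next
    case (Suc k)
    have "D (u^Suc (Suc k)) = D (u * u^Suc k)" by simp
    also have "\<dots> = D u * u^Suc k + u * (of_nat (Suc k) * u^k * D u)" using Suc by (simp add: mult)
    also have "\<dots> = of_nat (Suc (Suc k)) * u^Suc k * D u"
      by (simp only: power_Suc of_nat_Suc ring_distribs mult_1_left mult_1_right mult.assoc mult.left_commute mult.commute add.commute)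
    finally show ?case .
  qed
  have termD: "D (fps_const [:(-1)^(k+1) / of_nat k:] * u^k) = ((-1)^(k+1) * u^(k-1)) * D u"
    if k1: "k \<ge> 1" for k
  proof -
    obtain m where k: "k = Suc m" using k1 by (cases k) auto
    have "D (fps_const [:(-1)^(k+1) / of_nat k:] * u^k)
        = fps_const [:(-1)^(k+1) / of_nat k:] * (of_nat k * u^m * D u)"
      using Dc Dpow k by simp
    also have "fps_const [:(-1)^(k+1) / of_nat k:] * (of_nat k :: complex poly fps)
             = fps_const [:(-1)^(k+1):]"
    proof -
      have "(1::complex) + of_nat m \<noteq> 0" by (metis of_nat_Suc of_nat_eq_0_iff Zero_not_Suc)
      then show ?thesis using k by (simp add: fps_of_nat[symmetric] of_nat_poly)
    qed
    then have "fps_const [:(-1)^(k+1) / of_nat k:] * (of_nat k * u^m * D u)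
             = fps_const [:(-1)^(k+1):] * u^m * D u"
      by (metis mult.assoc)
    finally show ?thesis using k const_sign[of "k+1"] by simp
  qed
  have DS: "D (logS u N) = (\<Sum>k=1..N. (-1)^(k+1) * u^(k-1)) * D u" for N
    unfolding logS_def Dsum sum_distrib_right by (rule sum.cong[OF refl]) (rule termD, simp)
  show ?thesis
  proof (rule fps_ext)
    fix n
    have nu0: "(-u)$0 = 0" using u0 by simp
    have "((1+u) * D L) $ n = (\<Sum>i=0..n. (1+u)$i * D L $ (n-i))" by (simp add: fps_mult_nth)
    also have "\<dots> = (\<Sum>i=0..n. (1+u)$i * D (logS u (n+2)) $ (n-i))"
    proof (rule sum.cong[OF refl])
      fix i assume "i \<in> {0..n}"
      have "D L $ (n-i) = D (logS u (n+2)) $ (n-i)"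
        by (rule loc) (rule L, simp)
      then show "(1+u)$i * D L $ (n-i) = (1+u)$i * D (logS u (n+2)) $ (n-i)" by simp
    qed
    also have "\<dots> = ((1+u) * D (logS u (n+2))) $ n" by (simp add: fps_mult_nth)
    also have "(1+u) * D (logS u (n+2)) = (1 - (-u)^(n+2)) * D u"
      by (simp only: DS mult.assoc[symmetric] tele)
    also have "((1 - (-u)^(n+2)) * D u) $ n = D u $ n - ((-u)^(n+2) * D u) $ n"
      by (simp add: algebra_simps)
    also have "((-u)^(n+2) * D u) $ n = 0"
      using startsby_zero_power_prefix[OF nu0, of "n+2"] by (simp add: fps_mult_nth)
    finally show "((1+u) * D L) $ n = D u $ n" by simp
  qed
qed


lemma rel_alg:
  fixes X v a b c d W DW TW Yc L lY lT :: "'a::idom"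
  assumes W1: "W = X*X*b - X*v - X*a + a" and W2: "W = v + a - 1 - X*(Yc+L)"
    and D1: "DW = X*X*d - X*a - X*c + c" and D2: "DW = a + c - X*(1+lY)"
    and T: "TW = b + d - (Yc+L) - X*lT" and LY: "v*lY = a" and LT: "v*lT = b"
  shows "W = X*(v*(X*TW)) - X*((v-1)*W) - X*(v*DW) - (v-1)*W"
proof -
  have "X*X*v*TW = (v + X*v - X)*W + X*v*DW" using assms by algebra
  then show ?thesis by algebra
qed

definition vb :: "nat \<Rightarrow> complex poly fps \<Rightarrow> bool" where "vb n f \<longleftrightarrow> (\<forall>k<n. f$k = 0)"

lemma vb_mult: "vb n f \<Longrightarrow> vb n (A*f)"
  by (auto simp: vb_def fps_mult_nth intro!: sum.neutral)
lemma vb_X: "vb n f \<Longrightarrow> vb (Suc n) (fps_X*f)"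
  by (auto simp: vb_def)
lemma vb_Dy: "vb n f \<Longrightarrow> vb n (Dy f)"
  by (auto simp: vb_def)
lemma vb_XDt: "vb n f \<Longrightarrow> vb n (fps_X * fps_deriv f)"
  by (auto simp: vb_def)
lemma vb_u: "A$0 = 0 \<Longrightarrow> vb n f \<Longrightarrow> vb (Suc n) (A*f)"
  unfolding vb_def
proof (intro allI impI)
  fix k assume A0: "A$0 = 0" and f: "\<forall>k<n. f$k = 0" and k: "k < Suc n"
  show "(A*f)$k = 0" unfolding fps_mult_nth
  proof (rule sum.neutral, intro ballI)
    fix i assume "i \<in> {0..k}"
    then show "A$i * f$(k-i) = 0" using A0 f k by (cases i) auto
  qed
qed
lemma vb_diff: "vb n f \<Longrightarrow> vb n g \<Longrightarrow> vb n (f - g)" by (auto simp: vb_def)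
lemma vb_mono: "vb (Suc n) f \<Longrightarrow> vb n f" by (auto simp: vb_def)

lemma ser_log_logS:
  assumes V0: "V 0 = 1" and nN: "n \<le> N"
  shows "ser_log V n = logS (toF V - 1) N $ n"
proof -
  let ?u = "toF V - 1"
  have tu: "toF (ser_sub V ser_one) = ?u"
    by (rule fps_ext) (simp add: ser_sub_def ser_one_def)
  have u0: "?u $ 0 = 0" using V0 by simp
  have "ser_log V n = (\<Sum>k=1..n. smult ((-1) ^ (k + 1) / of_nat k) ((?u^k) $ n))"
    unfolding ser_log_def ser_log1p_def ser_pow_toF tu ..
  also have "\<dots> = (\<Sum>k=1..N. smult ((-1) ^ (k + 1) / of_nat k) ((?u^k) $ n))"
  proof (rule sum.mono_neutral_left)
    show "\<forall>i\<in>{1..N} - {1..n}. smult ((-1) ^ (i + 1) / of_nat i) ((?u^i) $ n) = 0"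
      using startsby_zero_power_prefix[OF u0] by auto
  qed (use nN in auto)
  also have "\<dots> = logS ?u N $ n"
    unfolding logS_def fps_sum_nth by simp
  finally show ?thesis .
qed

lemma Dy_Y: "Dy (fps_const [:0,1:]) = 1"
  by (rule fps_ext) (simp add: pderiv_pCons)

lemma main_W:
  fixes V :: ser
  assumes "V_eqn V"
  shows "\<forall>n\<ge>1. smult (of_nat (n - 1)) (V n) = pderiv (V n) - pderiv (V (Suc n))"
    and "\<forall>m\<ge>1. ser_log V m = V (Suc m) + pderiv (V (Suc m))"
proof -
  have eq: "V n = ser_one n + ser_y_over_x n - ser_xinv V n - ser_dx V n
      - ser_xinv (ser_dy V) n + ser_xinv (ser_log V) n" for n
    using fun_cong[OF assms[unfolded V_eqn_def], of n]
    by (simp add: ser_add_def ser_sub_def)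
  have V0: "V 0 = 1" using eq[of 0]
    by (simp add: ser_one_def ser_y_over_x_def ser_xinv_def ser_dx_def)
  define X :: "complex poly fps" where "X = fps_X"
  define Yc :: "complex poly fps" where "Yc = fps_const [:0,1:]"
  define v where "v = toF V"
  define L where "L = toF (ser_log V)"
  define u where "u = v - 1"
  have u0: "u $ 0 = 0" using V0 by (simp add: u_def v_def)
  have Lu: "L $ n = logS u N $ n" if "n \<le> N" for n N
    using ser_log_logS[of V n N, OF V0 that] by (simp add: L_def u_def v_def)
  have LY: "v * Dy L = Dy v"
  proof -
    have "(1+u) * Dy L = Dy u"
      by (rule log_deriv_generic[where D=Dy and u=u and L=L, OF _ _ Dy_const _ u0 Lu]) auto
    then show ?thesis by (simp add: u_def)
  qed
  have LT: "v * fps_deriv L = fps_deriv v"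
  proof -
    have "(1+u) * fps_deriv L = fps_deriv u"
      by (rule log_deriv_generic[where D=fps_deriv and u=u and L=L, OF _ _ _ _ u0 Lu]) (auto simp: algebra_simps)
    then show ?thesis by (simp add: u_def)
  qed
  have E: "v = 1 + X*Yc - X*v + X*(X*fps_deriv v) - X*Dy v + X*L"
  proof (rule fps_ext)
    fix n
    show "v $ n = (1 + X*Yc - X*v + X*(X*fps_deriv v) - X*Dy v + X*L) $ n"
    proof (cases n)
      case 0 then show ?thesis using V0 by (simp add: X_def v_def)
    next
      case (Suc k)
      then show ?thesis using eq[of n]
        by (cases k) (auto simp: X_def Yc_def v_def L_def ser_one_def ser_y_over_x_def ser_xinv_def
              ser_dx_def ser_dy_def of_nat_poly)
    qed
  qed
  define W where "W = X*(X*fps_deriv v) - X*v - X*Dy v + Dy v"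
  have W2: "W = v + Dy v - 1 - X*(Yc+L)"
    using E unfolding W_def by algebra
  have D1: "Dy W = X*(X*fps_deriv (Dy v)) - X*Dy v - X*Dy (Dy v) + Dy (Dy v)"
    unfolding W_def by (simp add: X_def Dy_Dt)
  have D2: "Dy W = Dy v + Dy (Dy v) - X*(1 + Dy L)"
    unfolding W2 by (simp add: X_def Yc_def Dy_Y)
  have T: "fps_deriv W = fps_deriv v + fps_deriv (Dy v) - (Yc+L) - X*fps_deriv L"
    unfolding W2 by (simp add: X_def Yc_def algebra_simps)
  have R: "W = X*(v*(X*fps_deriv W)) - X*((v-1)*W) - X*(v*Dy W) - (v-1)*W"
    by (rule rel_alg[OF W_def[unfolded mult.assoc[symmetric]] W2 D1[unfolded mult.assoc[symmetric]] D2 T LY LT])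
  have "vb n W" for n
  proof (induction n)
    case 0 then show ?case by (simp add: vb_def)
  next
    case (Suc n)
    have v1: "(v - 1) $ 0 = 0" using V0 by (simp add: v_def)
    have "vb (Suc n) (X*(v*(X*fps_deriv W)) - X*((v-1)*W) - X*(v*Dy W) - (v-1)*W)"
      unfolding X_def
      by (intro vb_diff vb_X vb_mult vb_XDt vb_Dy vb_u[OF v1[unfolded X_def]] Suc)
    then show ?case using R by simp
  qed
  then have W0: "W $ n = 0" for n by (auto simp: vb_def)
  show "\<forall>n\<ge>1. smult (of_nat (n - 1)) (V n) = pderiv (V n) - pderiv (V (Suc n))"
  proof (intro allI impI)
    fix n :: nat assume n: "n \<ge> 1"
    then obtain k where k: "n = Suc k" by (cases n) auto
    have "W $ Suc n = 0" by (rule W0)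
    then have "of_nat n * V n - V n - pderiv (V n) + pderiv (V (Suc n)) = 0"
      using k by (simp add: W_def X_def v_def)
    moreover have "of_nat n * V n = smult (of_nat k) (V n) + V n"
      using k by (simp add: of_nat_poly smult_add_left)
    ultimately show "smult (of_nat (n - 1)) (V n) = pderiv (V n) - pderiv (V (Suc n))"
      using k by (simp add: algebra_simps)
  qed
  show "\<forall>m\<ge>1. ser_log V m = V (Suc m) + pderiv (V (Suc m))"
  proof (intro allI impI)
    fix m :: nat assume m: "m \<ge> 1"
    have "W $ Suc m = 0" by (rule W0)
    then show "ser_log V m = V (Suc m) + pderiv (V (Suc m))"
      using m unfolding W2 by (simp add: X_def Yc_def v_def L_def algebra_simps)
  qed
qed


theorem theorem4p6:
  fixes V :: ser and P Q :: "nat \<Rightarrow> complex poly"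
  assumes "V \<in> serA" and "V_eqn V"
    and "\<And>n. n \<ge> 1 \<Longrightarrow> P (n - 1) = V n"
    and "\<And>n. n \<ge> 1 \<Longrightarrow> Q n = ser_log V n"
  shows "(\<forall>n\<ge>1. smult (of_nat (n - 1)) (P (n - 1)) = pderiv (P (n - 1)) - pderiv (P n))
       \<and> (\<forall>n\<ge>2. smult (of_nat (n - 1)) (Q (n - 1)) = pderiv (Q (n - 1)) - pderiv (Q n))"
proof -
  note PC = main_W(1)[OF assms(2)] and LC = main_W(2)[OF assms(2)]
  have Pn: "P n = V (Suc n)" for n using assms(3)[of "Suc n"] by simp
  show ?thesis
  proof (intro conjI allI impI)
    fix n :: nat assume n: "n \<ge> 1"
    then obtain k where k: "n = Suc k" by (cases n) auto
    show "smult (of_nat (n - 1)) (P (n - 1)) = pderiv (P (n - 1)) - pderiv (P n)"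
      using PC[rule_format, of n] n k by (simp add: Pn del: of_nat_Suc)
  next
    fix n :: nat assume n: "n \<ge> 2"
    then obtain m where m: "n = Suc m" "m \<ge> 1" by (cases n) auto
    have Qm: "Q m = V (Suc m) + pderiv (V (Suc m))" using assms(4)[of m] LC m by simp
    have Qn: "Q (Suc m) = V (Suc (Suc m)) + pderiv (V (Suc (Suc m)))" using assms(4)[of "Suc m"] LC m by simp
    have h: "smult (of_nat m) (V (Suc m)) = pderiv (V (Suc m)) - pderiv (V (Suc (Suc m)))"
      using PC[rule_format, of "Suc m"] by (simp del: of_nat_Suc)
    have h': "smult (of_nat m) (pderiv (V (Suc m))) = pderiv (pderiv (V (Suc m))) - pderiv (pderiv (V (Suc (Suc m))))"
      using arg_cong[OF h, of pderiv] by (simp add: pderiv_smult pderiv_diff)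
    show "smult (of_nat (n - 1)) (Q (n - 1)) = pderiv (Q (n - 1)) - pderiv (Q n)"
      using h h' m by (simp add: Qm Qn smult_add_right pderiv_add)
  qed
qed

end
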